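(* In the one-shot wage theft problem described in the context, suppose $C'(0)<Py_H-Py_L$ and let $a^*$ be an optimal effort level (a maximizer of $g$ on $[0,1)$). Then every optimal solution of the problem with effort level $a^*$ has promised wages $w_i^*(a^* )$ and wage thefts $b_i^*(a^* )$, $i\in\{H,L\}$; i.e. these are the unique optimal wages and wage thefts.
   Context: Fix $P>0$, $y_H>y_L\ge 0$, a real number $u$ (reservation utility) and $\gamma\in(0,1]$ (inspection probability). Let $C:[0,1)\to\mathbb{R}$ be the worker's effort cost: $C(0)=0$, $C$ increasing, strictly convex, twice differentiable, $C(a)\to\infty$ as $a\to1$. Let $\eta:[0,\infty)\to\mathbb{R}$ be the penalty: strictly convex, increasing, twice differentiable, $\eta(0)=0$. The one-shot wage theft problem is: choose $a,w_H,w_L,b_H,b_L$ to maximize $a\,(Py_H-w_H+b_H-\gamma\eta(b_H))+(1-a)\,(Py_L-w_L+b_L-\gamma\eta(b_L))$ subject to $a\in\arg\max_{a'\in[0,1)}\{a'w_H+(1-a')w_L-C(a')\}$; $a w_H+(1-a)w_L-C(a)\ge u$; $w_H,w_L\ge0$; $0\le b_L\le w_L$, $0\le b_H\le w_H$; $a\in[0,1)$. Let $\beta\ge0$ satisfy $\gamma\eta'(\beta)=1$ (assumed to exist). For $a\in[0,1)$ define $w_L^*(a)=\max\{0,u-aC'(a)+C(a)\}$, $w_H^*(a)=w_L^*(a)+C'(a)$, $b_i^*(a)=\min\{\beta,w_i^*(a)\}$, and $g(a)=a\,(Py_H-w_H^*(a)+b_H^*(a)-\gamma\eta(b_H^*(a)))+(1-a)\,(Py_L-w_L^*(a)+b_L^*(a)-\gamma\eta(b_L^*(a)))$;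 optimal effort levels are the maximizers of $g$ on $[0,1)$. *)

theory Defs
  imports "HOL-Analysis.Analysis"
begin

definition strictly_convex_on :: "real set \<Rightarrow> (real \<Rightarrow> real) \<Rightarrow> bool" where
  "strictly_convex_on S f \<longleftrightarrow>
     (\<forall>x\<in>S. \<forall>y\<in>S. \<forall>t::real. x \<noteq> y \<longrightarrow> 0 < t \<longrightarrow> t < 1 \<longrightarrow>
        f (t * x + (1 - t) * y) < t * f x + (1 - t) * f y)"

definition wt_objective ::
  "real \<Rightarrow> real \<Rightarrow> real \<Rightarrow> real \<Rightarrow> (real \<Rightarrow> real) \<Rightarrow>
   real \<Rightarrow> real \<Rightarrow> real \<Rightarrow> real \<Rightarrow> real \<Rightarrow> real" where
  "wt_objective P yH yL \<gamma> \<eta> a wH wL bH bL =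
     a * (P * yH - wH + bH - \<gamma> * \<eta> bH) + (1 - a) * (P * yL - wL + bL - \<gamma> * \<eta> bL)"

definition wt_feasible ::
  "(real \<Rightarrow> real) \<Rightarrow> real \<Rightarrow> real \<Rightarrow> real \<Rightarrow> real \<Rightarrow> real \<Rightarrow> real \<Rightarrow> bool" where
  "wt_feasible C u a wH wL bH bL \<longleftrightarrow>
     a \<in> {0..<1} \<and>
     (\<forall>a'\<in>{0..<1}. a' * wH + (1 - a') * wL - C a' \<le> a * wH + (1 - a) * wL - C a) \<and>
     a * wH + (1 - a) * wL - C a \<ge> u \<and>
     wH \<ge> 0 \<and> wL \<ge> 0 \<and> 0 \<le> bL \<and> bL \<le> wL \<and> 0 \<le> bH \<and> bH \<le> wH"

definition wt_optimal ::
  "real \<Rightarrow> real \<Rightarrow> real \<Rightarrow> real \<Rightarrow> real \<Rightarrow> (real \<Rightarrow> real) \<Rightarrow> (real \<Rightarrow> real) \<Rightarrow>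
   real \<Rightarrow> real \<Rightarrow> real \<Rightarrow> real \<Rightarrow> real \<Rightarrow> bool" where
  "wt_optimal P yH yL u \<gamma> C \<eta> a wH wL bH bL \<longleftrightarrow>
     wt_feasible C u a wH wL bH bL \<and>
     (\<forall>a' wH' wL' bH' bL'. wt_feasible C u a' wH' wL' bH' bL' \<longrightarrow>
        wt_objective P yH yL \<gamma> \<eta> a' wH' wL' bH' bL' \<le> wt_objective P yH yL \<gamma> \<eta> a wH wL bH bL)"

text \<open>Candidate wages and thefts; C' is the derivative of C.\<close>
definition wL_star :: "(real \<Rightarrow> real) \<Rightarrow> (real \<Rightarrow> real) \<Rightarrow> real \<Rightarrow> real \<Rightarrow> real" where
  "wL_star C C' u a = max 0 (u - a * C' a + C a)"

definition wH_star :: "(real \<Rightarrow> real) \<Rightarrow> (real \<Rightarrow> real) \<Rightarrow> real \<Rightarrow> real \<Rightarrow> real" where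
  "wH_star C C' u a = wL_star C C' u a + C' a"

definition b_star :: "real \<Rightarrow> real \<Rightarrow> real" where
  "b_star \<beta> w = min \<beta> w"

definition g_fun ::
  "real \<Rightarrow> real \<Rightarrow> real \<Rightarrow> real \<Rightarrow> real \<Rightarrow> (real \<Rightarrow> real) \<Rightarrow> (real \<Rightarrow> real) \<Rightarrow>
   (real \<Rightarrow> real) \<Rightarrow> real \<Rightarrow> real \<Rightarrow> real" where
  "g_fun P yH yL u \<gamma> C C' \<eta> \<beta> a =
     wt_objective P yH yL \<gamma> \<eta> a (wH_star C C' u a) (wL_star C C' u a)
       (b_star \<beta> (wH_star C C' u a)) (b_star \<beta> (wL_star C C' u a))"

end

theory Submission
  imports Defs
begin
lemma tangent_right:
  fixes f :: "real \<Rightarrow> real"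
  assumes sc: "strictly_convex_on S f" and sub: "{c..x} \<subseteq> S" and cx: "c < x"
    and der: "(f has_real_derivative D) (at c within S)"
  shows "D * (x - c) \<le> f x - f c"
proof -
  have "(f has_real_derivative D) (at c within {c..x})"
    using der sub by (rule DERIV_subset)
  then have "(f has_real_derivative D) (at_right c)"
    using at_within_Icc_at_right[OF cx] by simp
  then have lim: "((\<lambda>y. (f y - f c) / (y - c)) \<longlongrightarrow> D) (at_right c)"
    by (simp add: has_field_derivative_iff)
  have ev: "eventually (\<lambda>y. (f y - f c) / (y - c) \<le> (f x - f c) / (x - c)) (at_right c)"
  proof -
    have "eventually (\<lambda>y. y \<in> {c<..<x}) (at_right c)"
      using eventually_at_right_real[OF cx] by simp
    then show ?thesis
    proof (rule eventually_mono)
      fix y assume y: "y \<in> {c<..<x}"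
      define t where "t = (x - y) / (x - c)"
      have t0: "0 < t" "t < 1" using y cx by (auto simp: t_def field_simps)
      have tt: "t * (x - c) = x - y" using cx by (simp add: t_def)
      have yt: "y = t * c + (1 - t) * x" using tt by (simp add: algebra_simps)
      have "c \<in> S" "x \<in> S" using sub cx by auto
      then have "f (t * c + (1 - t) * x) < t * f c + (1 - t) * f x"
        using sc t0 cx unfolding strictly_convex_on_def by auto
      then have "f y < t * f c + (1 - t) * f x" using yt by simp
      then have "f y - f c < (1 - t) * (f x - f c)" by (simp add: algebra_simps)
      moreover have "1 - t = (y - c) / (x - c)" using cx by (simp add: t_def field_simps)
      ultimately have "f y - f c < (y - c) * ((f x - f c) / (x - c))" by simp
      then show "(f y - f c) / (y - c) \<le> (f x - f c) / (x - c)"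
        using y by (simp add: divide_simps mult.commute)
    qed
  qed
  have "D \<le> (f x - f c) / (x - c)"
    using tendsto_upperbound[OF lim ev] by simp
  then show ?thesis using cx by (simp add: field_simps)
qed

lemma tangent_left:
  fixes f :: "real \<Rightarrow> real"
  assumes sc: "strictly_convex_on S f" and sub: "{x..c} \<subseteq> S" and cx: "x < c"
    and der: "(f has_real_derivative D) (at c within S)"
  shows "D * (x - c) \<le> f x - f c"
proof -
  have "(f has_real_derivative D) (at c within {x..c})"
    using der sub by (rule DERIV_subset)
  then have "(f has_real_derivative D) (at_left c)"
    using at_within_Icc_at_left[OF cx] by simp
  then have lim: "((\<lambda>y. (f y - f c) / (y - c)) \<longlongrightarrow> D) (at_left c)"
    by (simp add: has_field_derivative_iff)
  have ev: "eventually (\<lambda>y. (f x - f c) / (x - c) \<le> (f y - f c) / (y - c)) (at_left c)"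
  proof -
    have "eventually (\<lambda>y. y \<in> {x<..<c}) (at_left c)"
      using eventually_at_left_real[OF cx] by simp
    then show ?thesis
    proof (rule eventually_mono)
      fix y assume y: "y \<in> {x<..<c}"
      define t where "t = (c - y) / (c - x)"
      have t0: "0 < t" "t < 1" using y cx by (auto simp: t_def field_simps)
      have tt: "t * (c - x) = c - y" using cx by (simp add: t_def)
      have yt: "y = t * x + (1 - t) * c" using tt by (simp add: algebra_simps)
      have "c \<in> S" "x \<in> S" using sub cx by auto
      then have "f (t * x + (1 - t) * c) < t * f x + (1 - t) * f c"
        using sc t0 cx unfolding strictly_convex_on_def by auto
      then have "f y < t * f x + (1 - t) * f c" using yt by simp
      then have "f y - f c < t * (f x - f c)" by (simp add: algebra_simps)
      moreover have "t = (y - c) / (x - c)" using cx by (simp add: t_def field_simps)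
      ultimately have "f y - f c < (y - c) * ((f x - f c) / (x - c))" by simp
      then show "(f x - f c) / (x - c) \<le> (f y - f c) / (y - c)"
        using y by (simp add: divide_simps mult.commute)
    qed
  qed
  have "(f x - f c) / (x - c) \<le> D"
    using tendsto_lowerbound[OF lim ev] by simp
  then show ?thesis using cx by (simp add: field_simps)
qed
lemma tangent_gen:
  fixes f :: "real \<Rightarrow> real"
  assumes sc: "strictly_convex_on S f" and sub: "{min c x..max c x} \<subseteq> S"
    and der: "(f has_real_derivative D) (at c within S)"
  shows "D * (x - c) \<le> f x - f c"
proof (cases x c rule: linorder_cases)
  case less then show ?thesis using tangent_left[OF sc _ less der] sub by auto
next
  case equal then show ?thesis by simp
next
  case greater then show ?thesis using tangent_right[OF sc _ greater der] sub by auto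
qed

lemma k_max:
  fixes \<eta> \<eta>' :: "real \<Rightarrow> real"
  assumes sc: "strictly_convex_on {0..} \<eta>"
    and der: "(\<eta> has_real_derivative \<eta>' \<beta>) (at \<beta> within {0..})"
    and g: "\<gamma> > 0" "\<gamma> * \<eta>' \<beta> = 1" and b0: "\<beta> \<ge> 0" "b \<ge> 0" "b \<noteq> \<beta>"
  shows "b - \<gamma> * \<eta> b < \<beta> - \<gamma> * \<eta> \<beta>"
proof -
  define m where "m = (b + \<beta>) / 2"
  have "\<eta>' \<beta> * (m - \<beta>) \<le> \<eta> m - \<eta> \<beta>"
    by (rule tangent_gen[OF sc _ der]) (use b0 in \<open>auto simp: m_def\<close>)
  moreover have H: "\<And>x y t. x \<ge> 0 \<Longrightarrow> y \<ge> 0 \<Longrightarrow> x \<noteq> y \<Longrightarrow> 0 < t \<Longrightarrow> t < 1 \<Longrightarrow>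
      \<eta> (t * x + (1 - t) * y) < t * \<eta> x + (1 - t) * \<eta> y"
    using sc unfolding strictly_convex_on_def by auto
  have "\<eta> ((1/2) * b + (1 - 1/2) * \<beta>) < (1/2) * \<eta> b + (1 - 1/2) * \<eta> \<beta>"
    by (rule H) (use b0 in auto)
  then have "\<eta> m < (1/2) * \<eta> b + (1/2) * \<eta> \<beta>" by (simp add: m_def add_divide_distrib)
  ultimately have "\<eta>' \<beta> * (b - \<beta>) < \<eta> b - \<eta> \<beta>" by (simp add: m_def field_simps)
  then have "\<gamma> * (\<eta>' \<beta> * (b - \<beta>)) < \<gamma> * (\<eta> b - \<eta> \<beta>)" using g by simp
  then have "(\<gamma> * \<eta>' \<beta>) * (b - \<beta>) < \<gamma> * (\<eta> b - \<eta> \<beta>)" by (simp add: mult.assoc)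
  then show ?thesis using g by (simp add: algebra_simps)
qed

lemma k_incr:
  fixes \<eta> \<eta>' :: "real \<Rightarrow> real"
  assumes sc: "strictly_convex_on {0..} \<eta>"
    and der: "(\<eta> has_real_derivative \<eta>' \<beta>) (at \<beta> within {0..})"
    and g: "\<gamma> > 0" "\<gamma> * \<eta>' \<beta> = 1" and b0: "\<beta> \<ge> 0"
    and xy: "0 \<le> x" "x < y" "y \<le> \<beta>"
  shows "x - \<gamma> * \<eta> x < y - \<gamma> * \<eta> y"
proof (cases "y = \<beta>")
  case True then show ?thesis using k_max[of \<eta> \<eta>' \<beta> \<gamma> x, OF sc der g b0] xy by auto
next
  case False
  define t where "t = (\<beta> - y) / (\<beta> - x)"
  have t0: "0 < t" "t < 1" using xy False by (auto simp: t_def field_simps)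
  have tt: "t * (\<beta> - x) = \<beta> - y" using xy by (simp add: t_def)
  have yt: "y = t * x + (1 - t) * \<beta>" using tt by (simp add: algebra_simps)
  have "\<eta> (t * x + (1 - t) * \<beta>) < t * \<eta> x + (1 - t) * \<eta> \<beta>"
    using sc t0 xy unfolding strictly_convex_on_def by auto
  then have e: "\<eta> y < t * \<eta> x + (1 - t) * \<eta> \<beta>" using yt by simp
  have km: "x - \<gamma> * \<eta> x < \<beta> - \<gamma> * \<eta> \<beta>" using k_max[of \<eta> \<eta>' \<beta> \<gamma> x, OF sc der g b0] xy by auto
  have "\<gamma> * \<eta> y < \<gamma> * (t * \<eta> x + (1 - t) * \<eta> \<beta>)" using e g by simp
  moreover have "y - \<gamma> * (t * \<eta> x + (1 - t) * \<eta> \<beta>) = t * (x - \<gamma> * \<eta> x) + (1 - t) * (\<beta> - \<gamma> * \<eta> \<beta>)"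
    by (subst yt) (simp add: algebra_simps)
  ultimately have "y - \<gamma> * \<eta> y > t * (x - \<gamma> * \<eta> x) + (1 - t) * (\<beta> - \<gamma> * \<eta> \<beta>)"
    by linarith
  moreover have "(1 - t) * (x - \<gamma> * \<eta> x) < (1 - t) * (\<beta> - \<gamma> * \<eta> \<beta>)"
    using km t0 by simp
  ultimately show ?thesis by (simp add: algebra_simps)
qed

theorem corollary1:
  fixes P yH yL u \<gamma> \<beta> a_opt :: real
    and C C' C'' \<eta> \<eta>' \<eta>'' :: "real \<Rightarrow> real"
  assumes P_pos: "P > 0" and y_ord: "yH > yL" and yL_nn: "yL \<ge> 0"
    and gamma: "0 < \<gamma>" "\<gamma> \<le> 1"
    and C0: "C 0 = 0"
    and C_incr: "strict_mono_on {0..<1} C"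
    and C_convex: "strictly_convex_on {0..<1} C"
    and C_deriv: "\<And>a. a \<in> {0..<1} \<Longrightarrow> (C has_real_derivative C' a) (at a within {0..<1})"
    and C_deriv2: "\<And>a. a \<in> {0..<1} \<Longrightarrow> (C' has_real_derivative C'' a) (at a within {0..<1})"
    and C_lim: "filterlim C at_top (at_left 1)"
    and eta0: "\<eta> 0 = 0"
    and eta_incr: "strict_mono_on {0..} \<eta>"
    and eta_convex: "strictly_convex_on {0..} \<eta>"
    and eta_deriv: "\<And>b. b \<in> {0..} \<Longrightarrow> (\<eta> has_real_derivative \<eta>' b) (at b within {0..})"
    and eta_deriv2: "\<And>b. b \<in> {0..} \<Longrightarrow> (\<eta>' has_real_derivative \<eta>'' b) (at b within {0..})"
    and beta: "\<beta> \<ge> 0" "\<gamma> * \<eta>' \<beta> = 1"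
    and C'0: "C' 0 < P * yH - P * yL"
    and a_opt: "a_opt \<in> {0..<1}"
      "\<forall>a\<in>{0..<1}. g_fun P yH yL u \<gamma> C C' \<eta> \<beta> a \<le> g_fun P yH yL u \<gamma> C C' \<eta> \<beta> a_opt"
  shows "\<forall>wH wL bH bL. wt_optimal P yH yL u \<gamma> C \<eta> a_opt wH wL bH bL \<longrightarrow>
           wH = wH_star C C' u a_opt \<and> wL = wL_star C C' u a_opt \<and>
           bH = b_star \<beta> (wH_star C C' u a_opt) \<and> bL = b_star \<beta> (wL_star C C' u a_opt)"
proof (intro allI impI)
  fix wH wL bH bL
  assume opt: "wt_optimal P yH yL u \<gamma> C \<eta> a_opt wH wL bH bL"
  define k where "k b = b - \<gamma> * \<eta> b" for b
  define f where "f w = - w + k (min \<beta> w)" for w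
  have etaD: "(\<eta> has_real_derivative \<eta>' \<beta>) (at \<beta> within {0..})" using eta_deriv beta by auto
  have K2: "k x < k y" if "0 \<le> x" "x < y" "y \<le> \<beta>" for x y
    using k_incr[of \<eta> \<eta>' \<beta> \<gamma> x y, OF eta_convex etaD gamma(1) beta(2) beta(1) that]
    by (simp add: k_def)
  have Kmax: "k b < k \<beta>" if "0 \<le> b" "b \<noteq> \<beta>" for b
    using k_max[of \<eta> \<eta>' \<beta> \<gamma> b, OF eta_convex etaD gamma(1) beta(2) beta(1) that]
    by (simp add: k_def)
  have K3: "k b \<le> k (min \<beta> w) \<and> (k b = k (min \<beta> w) \<longrightarrow> b = min \<beta> w)"
    if "0 \<le> b" "b \<le> w" for b w
  proof (cases "w \<le> \<beta>")
    case True
    then show ?thesis using K2[of b w] that by (cases "b = w") auto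
  next
    case False
    then show ?thesis using Kmax[of b] that by (cases "b = \<beta>") auto
  qed
  have F1: "f w2 < f w1" if "0 \<le> w1" "w1 < w2" for w1 w2
  proof (cases "min \<beta> w1 = min \<beta> w2")
    case True then show ?thesis using that by (simp add: f_def)
  next
    case False
    then have lt: "min \<beta> w1 < min \<beta> w2" using that by linarith
    have "\<eta> (min \<beta> w1) < \<eta> (min \<beta> w2)"
      by (rule strict_mono_onD[OF eta_incr _ _ lt]) (use that beta in auto)
    then have "\<gamma> * \<eta> (min \<beta> w1) < \<gamma> * \<eta> (min \<beta> w2)" using gamma by simp
    moreover have "min \<beta> w2 - min \<beta> w1 \<le> w2 - w1" using that by linarith
    ultimately show ?thesis unfolding f_def k_def by linarith
  qed
  have F1': "f w2 \<le> f w1" if "0 \<le> w1" "w1 \<le> w2" for w1 w2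
    using F1[of w1 w2] that by (cases "w1 = w2") auto
  have F2: "f w1 - (w2 - w1) \<le> f w2" if "0 \<le> w1" "w1 \<le> w2" for w1 w2
  proof -
    have "k (min \<beta> w1) \<le> k (min \<beta> w2)"
    proof (cases "min \<beta> w1 = min \<beta> w2")
      case False
      then have lt: "min \<beta> w1 < min \<beta> w2" using that by linarith
      have "0 \<le> min \<beta> w1" "min \<beta> w2 \<le> \<beta>" using that beta by auto
      then show ?thesis using K2[OF _ lt] by fastforce
    qed simp
    then show ?thesis by (simp add: f_def)
  qed
  have objK: "\<And>a wH wL bH bL. wt_objective P yH yL \<gamma> \<eta> a wH wL bH bL
      = a * (P * yH - wH + k bH) + (1 - a) * (P * yL - wL + k bL)"
    by (simp add: wt_objective_def k_def algebra_simps)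
  have gF: "\<And>a. g_fun P yH yL u \<gamma> C C' \<eta> \<beta> a
      = a * (P * yH + f (wH_star C C' u a)) + (1 - a) * (P * yL + f (wL_star C C' u a))"
    by (simp add: g_fun_def wt_objective_def b_star_def f_def k_def algebra_simps)
  have tangC: "C' c * (x - c) \<le> C x - C c" if "c \<in> {0..<1}" "x \<in> {0..<1}" for c x
    by (rule tangent_gen[OF C_convex _ C_deriv[OF that(1)]]) (use that in auto)
  have apos: "a_opt > 0"
  proof (rule ccontr)
    assume "\<not> a_opt > 0"
    then have a0: "a_opt = 0" using a_opt(1) by auto
    have "continuous (at 0 within {0..<1}) C'"
      using C_deriv2[of 0] by (simp add: DERIV_continuous)
    moreover have epos: "P * yH - P * yL - C' 0 > 0" using C'0 by simp
    ultimately obtain d where d: "d > 0"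
      "\<And>x'. x' \<in> {0..<1} \<Longrightarrow> dist x' 0 < d \<Longrightarrow> dist (C' x') (C' 0) < P * yH - P * yL - C' 0"
      unfolding continuous_within_eps_delta by blast
    define a1 where "a1 = min (d/2) (1/2)"
    have a1: "0 < a1" "a1 < 1" "a1 \<in> {0..<1}" using d by (auto simp: a1_def)
    have "dist (C' a1) (C' 0) < P * yH - P * yL - C' 0"
      using d(2)[OF a1(3)] d a1 by (auto simp: a1_def dist_real_def)
    then have Ca1: "C' a1 < P * yH - P * yL" by (simp add: dist_real_def abs_less_iff)
    have "C' a1 * (0 - a1) \<le> C 0 - C a1" using tangC[of a1 0] a1 by auto
    moreover have "C 0 < C a1" by (rule strict_mono_onD[OF C_incr]) (use a1 in auto)
    ultimately have tg: "a1 * C' a1 \<ge> C a1" "C a1 > 0" using C0 by (auto simp: algebra_simps)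
    then have "a1 * C' a1 > 0" by linarith
    then have Cpos: "C' a1 > 0" using a1 by (simp add: zero_less_mult_iff)
    define W1 where "W1 = wL_star C C' u a1"
    define W0 where "W0 = wL_star C C' u 0"
    have W1: "0 \<le> W1" "W1 \<le> W0" using tg C0 by (auto simp: W1_def W0_def wL_star_def)
    have H1: "wH_star C C' u a1 = W1 + C' a1" by (simp add: wH_star_def W1_def)
    have fH: "f W1 - C' a1 \<le> f (W1 + C' a1)" using F2[of W1 "W1 + C' a1"] W1 Cpos by simp
    have fW: "f W0 \<le> f W1" using F1' W1 by simp
    have "g_fun P yH yL u \<gamma> C C' \<eta> \<beta> a1 = a1 * (P * yH + f (W1 + C' a1)) + (1 - a1) * (P * yL + f W1)"
      by (simp add: gF H1 W1_def)
    also have "\<dots> \<ge> a1 * (P * yH + f W1 - C' a1) + (1 - a1) * (P * yL + f W1)"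
      using fH a1 by (simp add: mult_left_mono)
    finally have "g_fun P yH yL u \<gamma> C C' \<eta> \<beta> a1 \<ge> P * yL + f W1 + a1 * (P * yH - P * yL - C' a1)"
      by (simp add: algebra_simps)
    moreover have "a1 * (P * yH - P * yL - C' a1) > 0" using a1 Ca1 by simp
    moreover have "g_fun P yH yL u \<gamma> C C' \<eta> \<beta> 0 = P * yL + f W0" by (simp add: gF W0_def)
    ultimately have "g_fun P yH yL u \<gamma> C C' \<eta> \<beta> a1 > g_fun P yH yL u \<gamma> C C' \<eta> \<beta> a_opt"
      using fW a0 by simp
    moreover have "g_fun P yH yL u \<gamma> C C' \<eta> \<beta> a1 \<le> g_fun P yH yL u \<gamma> C C' \<eta> \<beta> a_opt"
      using a_opt(2) a1(3) by blast
    ultimately show False by linarith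
  qed
  have a_in: "0 < a_opt" "a_opt < 1" using apos a_opt(1) by auto
  from opt have feas: "wt_feasible C u a_opt wH wL bH bL"
    and best: "\<And>a' wH' wL' bH' bL'. wt_feasible C u a' wH' wL' bH' bL' \<Longrightarrow>
        wt_objective P yH yL \<gamma> \<eta> a' wH' wL' bH' bL' \<le> wt_objective P yH yL \<gamma> \<eta> a_opt wH wL bH bL"
    unfolding wt_optimal_def by auto
  from feas have IC: "\<And>a'. a' \<in> {0..<1} \<Longrightarrow> a' * wH + (1 - a') * wL - C a' \<le> a_opt * wH + (1 - a_opt) * wL - C a_opt"
    and PC: "a_opt * wH + (1 - a_opt) * wL - C a_opt \<ge> u"
    and nn: "wH \<ge> 0" "wL \<ge> 0" "0 \<le> bL" "bL \<le> wL" "0 \<le> bH" "bH \<le> wH"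
    unfolding wt_feasible_def by auto
  have "(C has_real_derivative C' a_opt) (at a_opt)"
    using C_deriv[OF a_opt(1)] at_within_interior[of a_opt "{0..<1}"] a_in by simp
  then have D: "((\<lambda>y. y * wH + (1 - y) * wL - C y) has_real_derivative (wH - wL - C' a_opt)) (at a_opt)"
    by (auto intro!: derivative_eq_intros)
  have dd: "wH - wL - C' a_opt = 0"
  proof (rule DERIV_local_max[OF D])
    show "0 < min a_opt (1 - a_opt)" using a_in by simp
    show "\<forall>y. \<bar>a_opt - y\<bar> < min a_opt (1 - a_opt) \<longrightarrow>
        y * wH + (1 - y) * wL - C y \<le> a_opt * wH + (1 - a_opt) * wL - C a_opt"
      using IC by (auto simp: abs_less_iff)
  qed
  define d where "d = C' a_opt"
  have wHd: "wH = wL + d" using dd by (simp add: d_def)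
  have "C 0 < C a_opt" by (rule strict_mono_onD[OF C_incr]) (use a_in in auto)
  then have "a_opt * d > 0" using IC[of 0] C0 wHd a_in by (simp add: algebra_simps)
  then have dpos: "d > 0" using a_in by (simp add: zero_less_mult_iff)
  define W where "W = wL_star C C' u a_opt"
  have Wge: "W \<ge> u - a_opt * d + C a_opt" "W \<ge> 0" by (auto simp: W_def wL_star_def d_def)
  have wLW: "wL \<ge> W" using PC nn wHd by (auto simp: W_def wL_star_def d_def algebra_simps)
  have WH: "wH_star C C' u a_opt = W + d" by (simp add: wH_star_def W_def d_def)
  have feas2: "wt_feasible C u a_opt (W + d) W (min \<beta> (W + d)) (min \<beta> W)"
    unfolding wt_feasible_def
  proof (intro conjI ballI)
    show "a_opt \<in> {0..<1}" using a_opt(1) .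
    fix a' :: real assume a': "a' \<in> {0..<1}"
    have "a' * wH + (1 - a') * wL - C a' \<le> a_opt * wH + (1 - a_opt) * wL - C a_opt" using IC[OF a'] .
    then have "a' * d - C a' \<le> a_opt * d - C a_opt" using wHd by (simp add: algebra_simps)
    then show "a' * (W + d) + (1 - a') * W - C a' \<le> a_opt * (W + d) + (1 - a_opt) * W - C a_opt"
      by (simp add: algebra_simps)
  next
    show "u \<le> a_opt * (W + d) + (1 - a_opt) * W - C a_opt" using Wge by (simp add: algebra_simps)
  qed (use Wge dpos beta in auto)
  have "wt_objective P yH yL \<gamma> \<eta> a_opt (W + d) W (min \<beta> (W + d)) (min \<beta> W)
      = a_opt * (P * yH + f (W + d)) + (1 - a_opt) * (P * yL + f W)"
    by (simp add: objK f_def algebra_simps)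
  then have ge: "a_opt * (P * yH + f (W + d)) + (1 - a_opt) * (P * yL + f W)
      \<le> a_opt * (P * yH - wH + k bH) + (1 - a_opt) * (P * yL - wL + k bL)"
    using best[OF feas2] by (simp add: objK)
  have kH: "k bH \<le> k (min \<beta> wH) \<and> (k bH = k (min \<beta> wH) \<longrightarrow> bH = min \<beta> wH)" using K3 nn by simp
  have kL: "k bL \<le> k (min \<beta> wL) \<and> (k bL = k (min \<beta> wL) \<longrightarrow> bL = min \<beta> wL)" using K3 nn by simp
  have le: "a_opt * (P * yH - wH + k bH) + (1 - a_opt) * (P * yL - wL + k bL)
      \<le> a_opt * (P * yH + f wH) + (1 - a_opt) * (P * yL + f wL)"
  proof -
    have "a_opt * (P * yH - wH + k bH) \<le> a_opt * (P * yH + f wH)"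
      using kH a_in by (intro mult_left_mono) (auto simp: f_def)
    moreover have "(1 - a_opt) * (P * yL - wL + k bL) \<le> (1 - a_opt) * (P * yL + f wL)"
      using kL a_in by (intro mult_left_mono) (auto simp: f_def)
    ultimately show ?thesis by linarith
  qed
  have wLeq: "wL = W"
  proof (rule ccontr)
    assume "wL \<noteq> W"
    then have "W < wL" using wLW by simp
    then have "f wL < f W" "f wH \<le> f (W + d)" using F1[of W wL] F1'[of "W + d" wH] Wge wHd dpos by auto
    then have "a_opt * (P * yH + f wH) + (1 - a_opt) * (P * yL + f wL)
        < a_opt * (P * yH + f (W + d)) + (1 - a_opt) * (P * yL + f W)"
    proof -
      have "a_opt * (P * yH + f wH) \<le> a_opt * (P * yH + f (W + d))"
        by (rule mult_left_mono) (use \<open>f wH \<le> f (W + d)\<close> a_in in auto)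
      moreover have "(1 - a_opt) * (P * yL + f wL) < (1 - a_opt) * (P * yL + f W)"
        by (rule mult_strict_left_mono) (use \<open>f wL < f W\<close> a_in in auto)
      ultimately show ?thesis by linarith
    qed
    then show False using ge le by linarith
  qed
  have wHeq: "wH = W + d" using wHd wLeq by simp
  have eqs: "a_opt * (k (min \<beta> wH) - k bH) + (1 - a_opt) * (k (min \<beta> wL) - k bL) \<le> 0"
    using ge wLeq wHeq by (simp add: f_def algebra_simps)
  have t1: "a_opt * (k (min \<beta> wH) - k bH) \<ge> 0" using kH a_in by simp
  have t2: "(1 - a_opt) * (k (min \<beta> wL) - k bL) \<ge> 0" using kL a_in by simp
  have "a_opt * (k (min \<beta> wH) - k bH) = 0" using eqs t1 t2 by linarith
  then have bHeq: "bH = min \<beta> wH" using kH a_in by simp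
  have "(1 - a_opt) * (k (min \<beta> wL) - k bL) = 0" using eqs t1 t2 by linarith
  then have bLeq: "bL = min \<beta> wL" using kL a_in by simp
  show "wH = wH_star C C' u a_opt \<and> wL = wL_star C C' u a_opt \<and>
           bH = b_star \<beta> (wH_star C C' u a_opt) \<and> bL = b_star \<beta> (wL_star C C' u a_opt)"
    using wHeq wLeq bHeq bLeq WH by (simp add: W_def b_star_def)
qed

end
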